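(* Consider a node resource $(\tau,u)\in R^V_S$. Let $0<\varepsilon\le1$ be such that $d_{\max}(r,\tau,u)/d_S(\tau,u)\le\varepsilon$ for all $r\in\mathcal R$. Let $\Delta=\sum_{r\in\mathcal R}\big(A_{\max}(r,\tau,u)/d_{\max}(r,\tau,u)\big)^2$ and $\beta=1+\varepsilon\sqrt{2\Delta\log(|V_S|\cdot|\mathcal T|)}$. Then $\mathbb P\big(A_{\tau,u}\ge\beta\cdot d_S(\tau,u)\big)\le(|V_S|\cdot|\mathcal T|)^{-4}$.
   Context: Substrate: directed graph $G_S=(V_S,E_S)$, node types $\mathcal T$, $V_S^\tau\subseteq V_S$, node resources $R^V_S=\{(\tau,u):u\in V_S^\tau\}$, resources $R_S=R^V_S\cup E_S$, capacities $d_S(x,y)>0$. Requests $r\in\mathcal R$: directed graph $G_r=(V_r,E_r)$, types $\tau_r$, demands $d_r(i),d_r(i,j)\ge0$, allowed node sets $V_S^{r,i}\subseteq V_S^{\tau_r(i)}$, allowed edge sets $E_S^{r,i,j}\subseteq E_S$. Valid mappings $m_r$ (each node $i$ to a node of $V_S^{r,i}$, each edge $(i,j)$ to a directed path between the images within $E_S^{r,i,j}$), set $\mathcal M_r$; allocation $A(m_r,\tau,u)=\sum_{i:\tau_r(i)=\tau,m^V_r(i)=u}d_r(i)$, $A(m_r,u,v)=\sum_{(i,j):(u,v)\in m^E_r(i,j)}d_r(i,j)$; $d_{\max}(r,\tau,u)=\max_{i:u\in V_S^{r,i}}d_r(i)$; $A_{\max}(r,x,y)=\max_{m\in\mathcal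 M_r}A(m,x,y)$. Rounding setting (profit variant): for each request $r$ a finite family $\mathcal D_r=\{(f^k_r,m^k_r)\}_k$ with $f^k_r>0$, $m^k_r\in\mathcal M_r$, $\sum_kf^k_r\le1$, obtained by decomposing a feasible solution of the paper's decomposable LP relaxation of the VNEP, so that in particular $\sum_{r\in\mathcal R}\sum_kf^k_rA(m^k_r,x,y)\le d_S(x,y)$ for all $(x,y)\in R_S$. Independently for each $r$, mapping $m^k_r$ is selected with probability $f^k_r$ and no mapping with probability $1-\sum_kf^k_r$; $A_{r,x,y}$ is the allocation of the selected mapping on $(x,y)$ (0 if none) and $A_{x,y}=\sum_rA_{r,x,y}$. *)

theory Defs
  imports "HOL-Probability.Probability"
begin

text \<open>A mapping of a request: node mapping and, for each request edge, a directed
  substrate path given as its vertex sequence.\<close>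
type_synonym ('i,'v) vmapping = "('i \<Rightarrow> 'v) \<times> ('i \<times> 'i \<Rightarrow> 'v list)"

definition path_edges :: "'v list \<Rightarrow> ('v \<times> 'v) set" where
  "path_edges vs = set (zip vs (tl vs))"

definition is_dpath :: "('v \<times> 'v) set \<Rightarrow> 'v \<Rightarrow> 'v \<Rightarrow> 'v list \<Rightarrow> bool" where
  "is_dpath E s t vs \<longleftrightarrow> vs \<noteq> [] \<and> hd vs = s \<and> last vs = t \<and> distinct vs
     \<and> path_edges vs \<subseteq> E"

definition valid_mapping ::
  "'i set \<Rightarrow> ('i \<times> 'i) set \<Rightarrow> ('i \<Rightarrow> 'v set) \<Rightarrow> ('i \<times> 'i \<Rightarrow> ('v \<times> 'v) set)
     \<Rightarrow> ('i,'v) vmapping \<Rightarrow> bool" where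
  "valid_mapping Vr Er Vallow Eallow m \<longleftrightarrow>
     (\<forall>i\<in>Vr. fst m i \<in> Vallow i) \<and>
     (\<forall>(i,j)\<in>Er. is_dpath (Eallow (i,j)) (fst m i) (fst m j) (snd m (i,j)))"

definition alloc_node ::
  "'i set \<Rightarrow> ('i \<Rightarrow> 't) \<Rightarrow> ('i \<Rightarrow> real) \<Rightarrow> ('i,'v) vmapping \<Rightarrow> 't \<Rightarrow> 'v \<Rightarrow> real" where
  "alloc_node Vr tr d m \<tau> u = (\<Sum>i\<in>{i\<in>Vr. tr i = \<tau> \<and> fst m i = u}. d i)"

definition alloc_edge ::
  "('i \<times> 'i) set \<Rightarrow> ('i \<times> 'i \<Rightarrow> real) \<Rightarrow> ('i,'v) vmapping \<Rightarrow> 'v \<Rightarrow> 'v \<Rightarrow> real" where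
  "alloc_edge Er de m u v = (\<Sum>e\<in>{e\<in>Er. (u,v) \<in> path_edges (snd m e)}. de e)"

text \<open>d_max(r,tau,u) = max over request nodes i with u allowed for i of d_r(i);
  convention: 0 if there is no such node.\<close>
definition dmax :: "'i set \<Rightarrow> ('i \<Rightarrow> 'v set) \<Rightarrow> ('i \<Rightarrow> real) \<Rightarrow> 'v \<Rightarrow> real" where
  "dmax Vr Vallow d u =
     (if {i\<in>Vr. u \<in> Vallow i} = {} then 0 else Max (d ` {i\<in>Vr. u \<in> Vallow i}))"

text \<open>A_max(r,tau,u) = max over valid mappings of the node allocation;
  convention: 0 if there is no valid mapping.\<close>
definition Amax_node ::
  "'i set \<Rightarrow> ('i \<times> 'i) set \<Rightarrow> ('i \<Rightarrow> 'v set) \<Rightarrow> ('i \<times> 'i \<Rightarrow> ('v \<times> 'v) set)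
     \<Rightarrow> ('i \<Rightarrow> 't) \<Rightarrow> ('i \<Rightarrow> real) \<Rightarrow> 't \<Rightarrow> 'v \<Rightarrow> real" where
  "Amax_node Vr Er Vallow Eallow tr d \<tau> u =
     (let M = {m. valid_mapping Vr Er Vallow Eallow m} in
      if M = {} then 0 else Sup ((\<lambda>m. alloc_node Vr tr d m \<tau> u) ` M))"

text \<open>Selection distribution for one request: Some k with probability f k (k in K),
  None with the remaining probability.\<close>
definition selection_pmf :: "'k set \<Rightarrow> ('k \<Rightarrow> real) \<Rightarrow> 'k option pmf" where
  "selection_pmf K f = embed_pmf (\<lambda>x. case x of
       None \<Rightarrow> 1 - (\<Sum>k\<in>K. f k)
     | Some k \<Rightarrow> (if k \<in> K then f k else 0))"

end

theory Submission
  imports Defs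
begin

lemma sel_pmf:
  assumes fin: "finite K" and pos: "\<And>k. k \<in> K \<Longrightarrow> f k \<ge> 0" and s: "(\<Sum>k\<in>K. f k) \<le> 1"
  shows "pmf (selection_pmf K f) x = (case x of None \<Rightarrow> 1 - (\<Sum>k\<in>K. f k)
     | Some k \<Rightarrow> (if k \<in> K then f k else 0))"
  unfolding selection_pmf_def
proof (rule pmf_embed_pmf)
  fix x :: "'a option"
  show "0 \<le> (case x of None \<Rightarrow> 1 - (\<Sum>k\<in>K. f k) | Some k \<Rightarrow> (if k \<in> K then f k else 0))"
    using s pos by (auto split: option.split)
next
  let ?h = "\<lambda>x. case x of None \<Rightarrow> 1 - (\<Sum>k\<in>K. f k) | Some k \<Rightarrow> (if k \<in> K then f k else 0)"
  have "(\<integral>\<^sup>+x. ennreal (?h x) \<partial>count_space UNIV) = (\<Sum>x\<in>insert None (Some ` K). ennreal (?h x))"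
    by (rule nn_integral_count_space') (use fin in \<open>auto split: option.split\<close>)
  also have "\<dots> = ennreal (\<Sum>x\<in>insert None (Some ` K). ?h x)"
    using s pos by (intro sum_ennreal) (auto split: option.split)
  also have "(\<Sum>x\<in>insert None (Some ` K). ?h x) = ?h None + (\<Sum>x\<in>Some ` K. ?h x)"
    using fin by (subst sum.insert) auto
  also have "(\<Sum>x\<in>Some ` K. ?h x) = (\<Sum>k\<in>K. f k)"
    by (subst sum.reindex) (auto simp: inj_on_def)
  finally show "(\<integral>\<^sup>+x. ennreal (?h x) \<partial>count_space UNIV) = 1" by simp
qed

lemma set_sel_pmf:
  assumes fin: "finite K" and pos: "\<And>k. k \<in> K \<Longrightarrow> f k \<ge> 0" and s: "(\<Sum>k\<in>K. f k) \<le> 1"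
  shows "set_pmf (selection_pmf K f) \<subseteq> insert None (Some ` K)"
proof
  fix x assume "x \<in> set_pmf (selection_pmf K f)"
  hence "pmf (selection_pmf K f) x \<noteq> 0" by (simp add: set_pmf_eq)
  thus "x \<in> insert None (Some ` K)"
    using sel_pmf[OF assms, of x] by (auto split: option.splits if_splits)
qed

lemma expect_sel_pmf:
  fixes g :: "'a option \<Rightarrow> real"
  assumes fin: "finite K" and pos: "\<And>k. k \<in> K \<Longrightarrow> f k \<ge> 0" and s: "(\<Sum>k\<in>K. f k) \<le> 1"
    and g0: "g None = 0"
  shows "measure_pmf.expectation (selection_pmf K f) g = (\<Sum>k\<in>K. f k * g (Some k))"
proof -
  have "measure_pmf.expectation (selection_pmf K f) g =
        (\<Sum>a\<in>Some ` K. pmf (selection_pmf K f) a *\<^sub>R g a)"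
    using fin set_sel_pmf[OF assms(1-3)] g0
    by (intro integral_measure_pmf) auto
  also have "\<dots> = (\<Sum>k\<in>K. f k * g (Some k))"
    by (subst sum.reindex) (auto simp: inj_on_def sel_pmf[OF assms(1-3)])
  finally show ?thesis .
qed


theorem lemma22:
  fixes VS :: "'v set" and ES :: "('v \<times> 'v) set" and T :: "'t set"
    and VT :: "'t \<Rightarrow> 'v set"
    and dSn :: "'t \<Rightarrow> 'v \<Rightarrow> real" and dSe :: "'v \<Rightarrow> 'v \<Rightarrow> real"
    and R :: "'r set" and Vr :: "'r \<Rightarrow> 'i set" and Er :: "'r \<Rightarrow> ('i \<times> 'i) set"
    and tr :: "'r \<Rightarrow> 'i \<Rightarrow> 't"
    and drn :: "'r \<Rightarrow> 'i \<Rightarrow> real" and dre :: "'r \<Rightarrow> 'i \<times> 'i \<Rightarrow> real"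
    and Vallow :: "'r \<Rightarrow> 'i \<Rightarrow> 'v set" and Eallow :: "'r \<Rightarrow> 'i \<times> 'i \<Rightarrow> ('v \<times> 'v) set"
    and K :: "'r \<Rightarrow> 'k set" and f :: "'r \<Rightarrow> 'k \<Rightarrow> real"
    and m :: "'r \<Rightarrow> 'k \<Rightarrow> ('i,'v) vmapping"
    and \<tau> :: 't and u :: 'v and \<epsilon> :: real
  assumes finVS: "finite VS" and finT: "finite T"
    and ES_sub: "ES \<subseteq> VS \<times> VS"
    and VT_sub: "\<And>t. t \<in> T \<Longrightarrow> VT t \<subseteq> VS"
    and dSn_pos: "\<And>t v. t \<in> T \<Longrightarrow> v \<in> VT t \<Longrightarrow> dSn t v > 0"
    and dSe_pos: "\<And>a b. (a, b) \<in> ES \<Longrightarrow> dSe a b > 0"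
    and finR: "finite R"
    and finVr: "\<And>r. r \<in> R \<Longrightarrow> finite (Vr r)"
    and Er_sub: "\<And>r. r \<in> R \<Longrightarrow> Er r \<subseteq> Vr r \<times> Vr r"
    and tr_T: "\<And>r i. r \<in> R \<Longrightarrow> i \<in> Vr r \<Longrightarrow> tr r i \<in> T"
    and drn_nonneg: "\<And>r i. r \<in> R \<Longrightarrow> i \<in> Vr r \<Longrightarrow> drn r i \<ge> 0"
    and dre_nonneg: "\<And>r e. r \<in> R \<Longrightarrow> e \<in> Er r \<Longrightarrow> dre r e \<ge> 0"
    and Vallow_sub: "\<And>r i. r \<in> R \<Longrightarrow> i \<in> Vr r \<Longrightarrow> Vallow r i \<subseteq> VT (tr r i)"
    and Eallow_sub: "\<And>r e. r \<in> R \<Longrightarrow> e \<in> Er r \<Longrightarrow> Eallow r e \<subseteq> ES"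
    and finK: "\<And>r. r \<in> R \<Longrightarrow> finite (K r)"
    and f_pos: "\<And>r k. r \<in> R \<Longrightarrow> k \<in> K r \<Longrightarrow> f r k > 0"
    and m_valid: "\<And>r k. r \<in> R \<Longrightarrow> k \<in> K r \<Longrightarrow>
                    valid_mapping (Vr r) (Er r) (Vallow r) (Eallow r) (m r k)"
    and f_sum: "\<And>r. r \<in> R \<Longrightarrow> (\<Sum>k\<in>K r. f r k) \<le> 1"
    and cap_node: "\<And>t v. t \<in> T \<Longrightarrow> v \<in> VT t \<Longrightarrow>
         (\<Sum>r\<in>R. \<Sum>k\<in>K r. f r k * alloc_node (Vr r) (tr r) (drn r) (m r k) t v) \<le> dSn t v"
    and cap_edge: "\<And>a b. (a, b) \<in> ES \<Longrightarrow>
         (\<Sum>r\<in>R. \<Sum>k\<in>K r. f r k * alloc_edge (Er r) (dre r) (m r k) a b) \<le> dSe a b"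
    and res: "\<tau> \<in> T" "u \<in> VT \<tau>"
    and eps: "0 < \<epsilon>" "\<epsilon> \<le> 1"
    and eps_bound: "\<And>r. r \<in> R \<Longrightarrow> dmax (Vr r) (Vallow r) (drn r) u / dSn \<tau> u \<le> \<epsilon>"
  shows
    "let \<Delta> = (\<Sum>r\<in>R. (Amax_node (Vr r) (Er r) (Vallow r) (Eallow r) (tr r) (drn r) \<tau> u
                         / dmax (Vr r) (Vallow r) (drn r) u)\<^sup>2);
         N = real (card VS * card T);
         \<beta> = 1 + \<epsilon> * sqrt (2 * \<Delta> * ln N);
         A = (\<lambda>\<omega>. \<Sum>r\<in>R. case \<omega> r of None \<Rightarrow> 0
                 | Some k \<Rightarrow> alloc_node (Vr r) (tr r) (drn r) (m r k) \<tau> u)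
     in measure_pmf.prob (Pi_pmf R None (\<lambda>r. selection_pmf (K r) (f r)))
          {\<omega>. A \<omega> \<ge> \<beta> * dSn \<tau> u} \<le> 1 / N ^ 4"
proof -
  define g where "g r o' = (case o' of None \<Rightarrow> 0
                 | Some k \<Rightarrow> alloc_node (Vr r) (tr r) (drn r) (m r k) \<tau> u)" for r o'
  define Am where "Am r = Amax_node (Vr r) (Er r) (Vallow r) (Eallow r) (tr r) (drn r) \<tau> u" for r
  define dm where "dm r = dmax (Vr r) (Vallow r) (drn r) u" for r
  define \<Delta> where "\<Delta> = (\<Sum>r\<in>R. (Am r / dm r)\<^sup>2)"
  define N where "N = real (card VS * card T)"
  define \<beta> where "\<beta> = 1 + \<epsilon> * sqrt (2 * \<Delta> * ln N)"
  define P where "P = Pi_pmf R None (\<lambda>r. selection_pmf (K r) (f r))"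
  define D where "D = dSn \<tau> u"
  have Dpos: "D > 0" using dSn_pos res by (simp add: D_def)
  have uVS: "u \<in> VS" using VT_sub res by auto
  have N1: "N \<ge> 1"
  proof -
    have "card VS \<ge> 1" using uVS finVS card_0_eq by fastforce
    moreover have "card T \<ge> 1" using res finT card_0_eq by fastforce
    ultimately have "card VS * card T \<ge> 1 * 1" by (intro mult_le_mono)
    hence "real (card VS * card T) \<ge> real (1::nat)" by (simp only: of_nat_le_iff)
    thus ?thesis unfolding N_def by simp
  qed
  have lnN: "ln N \<ge> 0" using N1 by simp
  have \<Delta>0: "\<Delta> \<ge> 0" unfolding \<Delta>_def by (intro sum_nonneg) auto
  have \<beta>1: "\<beta> \<ge> 1" unfolding \<beta>_def using eps \<Delta>0 lnN by auto
  have alloc_nn: "alloc_node (Vr r) (tr r) (drn r) m' \<tau> u \<ge> 0" if r: "r \<in> R" for r m'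
    unfolding alloc_node_def using drn_nonneg[OF r] by (intro sum_nonneg) auto
  have alloc_le_sum: "alloc_node (Vr r) (tr r) (drn r) m' \<tau> u \<le> (\<Sum>i\<in>Vr r. drn r i)" if r: "r \<in> R" for r m'
    unfolding alloc_node_def using drn_nonneg[OF r] finVr[OF r] by (intro sum_mono2) auto
  have dm_nn: "dm r \<ge> 0" if r: "r \<in> R" for r
  proof (cases "{i\<in>Vr r. u \<in> Vallow r i} = {}")
    case True thus ?thesis by (simp add: dm_def dmax_def)
  next
    case False
    then obtain i where i: "i \<in> Vr r" "u \<in> Vallow r i" by auto
    have "drn r i \<le> Max (drn r ` {i\<in>Vr r. u \<in> Vallow r i})"
      using i finVr[OF r] by (intro Max_ge) auto
    thus ?thesis using drn_nonneg[OF r i(1)] False by (simp add: dm_def dmax_def)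
  qed
  have alloc_le_dm: "alloc_node (Vr r) (tr r) (drn r) m' \<tau> u \<le> real (card (Vr r)) * dm r"
    if r: "r \<in> R" and v: "valid_mapping (Vr r) (Er r) (Vallow r) (Eallow r) m'" for r m'
  proof -
    let ?S = "{i\<in>Vr r. tr r i = \<tau> \<and> fst m' i = u}"
    have "\<forall>i\<in>?S. drn r i \<le> dm r"
    proof
      fix i assume i: "i \<in> ?S"
      hence iV: "i \<in> Vr r" "u \<in> Vallow r i" using v unfolding valid_mapping_def by auto
      hence ne: "{i\<in>Vr r. u \<in> Vallow r i} \<noteq> {}" by auto
      have "drn r i \<le> Max (drn r ` {i\<in>Vr r. u \<in> Vallow r i})"
        using iV finVr[OF r] by (intro Max_ge) auto
      thus "drn r i \<le> dm r" using ne unfolding dm_def dmax_def by presburger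
    qed
    hence "alloc_node (Vr r) (tr r) (drn r) m' \<tau> u \<le> real (card ?S) * dm r"
      unfolding alloc_node_def by (intro sum_bounded_above) auto
    also have "\<dots> \<le> real (card (Vr r)) * dm r"
      using dm_nn[OF r] finVr[OF r] by (intro mult_right_mono) (auto intro: card_mono)
    finally show ?thesis .
  qed
  have Am_facts: "Am r \<ge> 0 \<and> Am r \<le> real (card (Vr r)) * dm r \<and>
      (\<forall>k\<in>K r. alloc_node (Vr r) (tr r) (drn r) (m r k) \<tau> u \<le> Am r)" if r: "r \<in> R" for r
  proof (cases "{m'. valid_mapping (Vr r) (Er r) (Vallow r) (Eallow r) m'} = {}")
    case True
    hence "K r = {}" using m_valid[OF r] by (metis (no_types, lifting) empty_Collect_eq equals0I)
    thus ?thesis using True dm_nn[OF r] by (simp add: Am_def Amax_node_def)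
  next
    case False
    let ?M = "{m'. valid_mapping (Vr r) (Er r) (Vallow r) (Eallow r) m'}"
    let ?F = "\<lambda>m'. alloc_node (Vr r) (tr r) (drn r) m' \<tau> u"
    have Am_eq: "Am r = Sup (?F ` ?M)" using False unfolding Am_def Amax_node_def Let_def by presburger
    have bdd: "bdd_above (?F ` ?M)"
      using alloc_le_sum[OF r] by (intro bdd_aboveI[where M="\<Sum>i\<in>Vr r. drn r i"]) auto
    obtain m0 where m0: "m0 \<in> ?M" using False by auto
    have up: "?F m' \<le> Am r" if "m' \<in> ?M" for m'
      unfolding Am_eq using that bdd by (intro cSUP_upper)
    have "0 \<le> Am r" using up[OF m0] alloc_nn[OF r, of m0] by linarith
    moreover have "Am r \<le> real (card (Vr r)) * dm r"
      unfolding Am_eq using False alloc_le_dm[OF r] by (intro cSUP_least) auto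
    moreover have "\<forall>k\<in>K r. ?F (m r k) \<le> Am r" using up m_valid[OF r] by auto
    ultimately show ?thesis by blast
  qed
  have Am_sq: "(Am r)\<^sup>2 \<le> (Am r / dm r)\<^sup>2 * (\<epsilon> * D)\<^sup>2" if r: "r \<in> R" for r
  proof (cases "dm r = 0")
    case True
    hence "Am r = 0" using Am_facts[OF r] by auto
    thus ?thesis by simp
  next
    case False
    hence dpos: "dm r > 0" using dm_nn[OF r] by auto
    have "dm r \<le> \<epsilon> * D" using eps_bound[OF r] Dpos
      by (simp add: dm_def D_def divide_le_eq)
    hence "(dm r)\<^sup>2 \<le> (\<epsilon> * D)\<^sup>2" using dpos by (intro power_mono) auto
    hence "(Am r / dm r)\<^sup>2 * (dm r)\<^sup>2 \<le> (Am r / dm r)\<^sup>2 * (\<epsilon> * D)\<^sup>2"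
      by (intro mult_left_mono) auto
    moreover have "(Am r / dm r)\<^sup>2 * (dm r)\<^sup>2 = (Am r)\<^sup>2" using dpos
      by (simp add: power_divide)
    ultimately show ?thesis by simp
  qed
  define S where "S = (\<Sum>r\<in>R. (Am r - 0)\<^sup>2)"
  have S_le: "S \<le> \<Delta> * (\<epsilon> * D)\<^sup>2"
    unfolding S_def \<Delta>_def sum_distrib_right using Am_sq by (intro sum_mono) auto
  have sel_ok: "finite (K r)" "\<And>k. k \<in> K r \<Longrightarrow> f r k \<ge> 0" "(\<Sum>k\<in>K r. f r k) \<le> 1"
    if r: "r \<in> R" for r
    using finK[OF r] f_pos[OF r] f_sum[OF r] by (auto intro: less_imp_le)
  have setP: "\<omega> r \<in> insert None (Some ` K r)" if "\<omega> \<in> set_pmf P" "r \<in> R" for \<omega> r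
  proof -
    have "\<omega> r \<in> set_pmf (selection_pmf (K r) (f r))"
      using set_Pi_pmf_subset'[OF finR, of None "\<lambda>r. selection_pmf (K r) (f r)"] that
      by (auto simp: P_def PiE_dflt_def)
    thus ?thesis using set_sel_pmf[OF sel_ok[OF that(2)]] by auto
  qed
  have g_range: "g r (\<omega> r) \<in> {0..Am r}" if "\<omega> \<in> set_pmf P" "r \<in> R" for \<omega> r
  proof -
    have "\<forall>k. 0 \<le> alloc_node (Vr r) (tr r) (drn r) (m r k) \<tau> u" using alloc_nn[OF that(2)] by blast
    thus ?thesis using setP[OF that] Am_facts[OF that(2)]
      by (auto simp: g_def)
  qed
  define A where "A \<omega> = (\<Sum>r\<in>R. g r (\<omega> r))" for \<omega>
  have main: "measure_pmf.prob P {\<omega>. A \<omega> \<ge> \<beta> * D} \<le> 1 / N ^ 4"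
  proof (cases "S = 0")
    case True
    hence "\<forall>r\<in>R. (Am r)\<^sup>2 = 0" unfolding S_def using finR by (subst (asm) sum_nonneg_eq_0_iff) auto
    hence Am0: "\<forall>r\<in>R. Am r = 0" by simp
    have "set_pmf P \<inter> {\<omega>. A \<omega> \<ge> \<beta> * D} = {}"
    proof (intro equalityI subsetI, clarsimp)
      fix \<omega> assume w: "\<omega> \<in> set_pmf P" "\<beta> * D \<le> A \<omega>"
      have "A \<omega> = 0" unfolding A_def using g_range[OF w(1)] Am0 by (intro sum.neutral) auto
      moreover have "\<beta> * D > 0" using \<beta>1 Dpos by simp
      ultimately show False using w by simp
    qed auto
    hence "measure_pmf.prob P {\<omega>. A \<omega> \<ge> \<beta> * D} = 0" by (simp add: measure_pmf_zero_iff)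
    thus ?thesis using N1 by simp
  next
    case False
    have Spos: "S > 0" using False unfolding S_def by (intro order.not_eq_order_implies_strict[OF _ sum_nonneg]) auto
    interpret H: Hoeffding_ineq "measure_pmf P" R "\<lambda>r \<omega>. g r (\<omega> r)" "\<lambda>_. 0" Am
      "\<Sum>r\<in>R. measure_pmf.expectation P (\<lambda>\<omega>. g r (\<omega> r))"
    proof unfold_locales
      show "finite R" by (rule finR)
      show "prob_space.indep_vars (measure_pmf P) (\<lambda>_. borel) (\<lambda>r \<omega>. g r (\<omega> r)) R"
        unfolding P_def
        by (rule prob_space.indep_vars_compose2[OF measure_pmf.prob_space_axioms indep_vars_Pi_pmf[OF finR]]) auto
      show "AE x in measure_pmf P. g r (x r) \<in> {0..Am r}" if "r \<in> R" for r
        using g_range that by (simp add: AE_measure_pmf_iff)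
    qed
    have expect: "measure_pmf.expectation P (\<lambda>\<omega>. g r (\<omega> r)) = (\<Sum>k\<in>K r. f r k * alloc_node (Vr r) (tr r) (drn r) (m r k) \<tau> u)"
      if r: "r \<in> R" for r
    proof -
      have "measure_pmf.expectation P (\<lambda>\<omega>. g r (\<omega> r)) =
            measure_pmf.expectation (map_pmf (\<lambda>\<omega>. \<omega> r) P) (g r)" by simp
      also have "map_pmf (\<lambda>\<omega>. \<omega> r) P = selection_pmf (K r) (f r)"
        unfolding P_def using r finR by (simp add: Pi_pmf_component)
      also have "measure_pmf.expectation (selection_pmf (K r) (f r)) (g r) =
          (\<Sum>k\<in>K r. f r k * g r (Some k))"
        by (rule expect_sel_pmf[OF sel_ok[OF r]]) (auto simp: g_def)
      finally show ?thesis by (simp add: g_def)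
    qed
    define \<mu> where "\<mu> = (\<Sum>r\<in>R. measure_pmf.expectation P (\<lambda>\<omega>. g r (\<omega> r)))"
    have mu_le: "\<mu> \<le> D" unfolding \<mu>_def D_def using expect cap_node[OF res] by simp
    define t where "t = \<epsilon> * sqrt (2 * \<Delta> * ln N) * D"
    have t0: "t \<ge> 0" unfolding t_def using eps Dpos \<Delta>0 lnN by simp
    have bD: "\<beta> * D = D + t" unfolding \<beta>_def t_def by (simp add: algebra_simps)
    define e where "e = \<beta> * D - \<mu>"
    have et: "e \<ge> t" unfolding e_def bD using mu_le by simp
    have "measure_pmf.prob P {\<omega>. A \<omega> \<ge> \<beta> * D} =
          measure_pmf.prob P {x\<in>space (measure_pmf P). (\<Sum>r\<in>R. g r (x r)) \<ge> \<mu> + e}"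
      unfolding e_def A_def by simp
    also have "\<dots> \<le> exp (-2 * e\<^sup>2 / S)"
      using H.Hoeffding_ineq_ge[of e] et t0 Spos unfolding \<mu>_def S_def by simp
    also have "\<dots> \<le> exp (-2 * t\<^sup>2 / S)"
      using et t0 Spos by (intro exp_le_cancel_iff[THEN iffD2] divide_right_mono) (auto intro: power_mono)
    also have "\<dots> \<le> exp (- (4 * ln N))"
    proof (intro exp_le_cancel_iff[THEN iffD2])
      have t2: "t\<^sup>2 = \<epsilon>\<^sup>2 * (2 * \<Delta> * ln N) * D\<^sup>2"
        unfolding t_def using \<Delta>0 lnN by (simp add: power_mult_distrib)
      have "4 * ln N * S \<le> 4 * ln N * (\<Delta> * (\<epsilon> * D)\<^sup>2)"
        using S_le lnN by (intro mult_left_mono) auto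
      also have "\<dots> = 2 * t\<^sup>2" unfolding t2 by (simp add: power_mult_distrib)
      finally have "4 * ln N \<le> 2 * t\<^sup>2 / S" using Spos by (simp add: le_divide_eq)
      thus "-2 * t\<^sup>2 / S \<le> - (4 * ln N)" by simp
    qed
    also have "exp (- (4 * ln N)) = 1 / N ^ 4"
    proof -
      have "4 * ln N = ln (N ^ 4)" using N1 by (simp add: ln_realpow)
      thus ?thesis using N1 by (simp add: exp_minus divide_inverse)
    qed
    finally show ?thesis .
  qed
  show ?thesis using main
    unfolding Let_def A_def g_def \<beta>_def \<Delta>_def N_def P_def D_def Am_def dm_def by simp
qed

end
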